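(* Let $K,T\subset\mathbb{R}^n$ be convex polytopes (containing the origin in their interiors), let $F_1,\dots,F_m$ be faces of $K$ and $G_1,\dots,G_m$ faces of $T$. Let $q=(q_1,\dots,q_m)$, $q'=(q_1',\dots,q_m')$ be closed polygonal curves with vertices on $\partial K$ and $p=(p_1,\dots,p_m)$, $p'=(p_1',\dots,p_m')$ closed polygonal curves with vertices on $\partial T$ such that for all $j$ (indices mod $m$) $$q_{j+1}-q_j\in N_T(p_j),\quad p_{j+1}-p_j\in -N_K(q_{j+1}),\quad q'_{j+1}-q'_j\in N_T(p'_j),\quad p'_{j+1}-p'_j\in -N_K(q'_{j+1}).$$ Assume that for each $j$, $q_j,q_j'\in\operatorname{relint}(F_j)$ if $F_j$ is not a vertex and $q_j,q_j'\in F_j$ if $F_j$ is a vertex, and likewise $p_j,p_j'\in\operatorname{relint}(G_j)$ if $G_j$ is not a vertex and $p_j,p'_j\in G_j$ if $G_j$ is a vertex. Then $\ell_T(q)=\ell_T(q')$.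
   Context: For a convex body $T$ (compact convex set with the origin in its interior), $T^\circ$ is its polar body and $\mu_{T^\circ}(x)=\min\{t\ge 0: x\in tT^\circ\}$ (equal to $h_T(x)=\max_{y\in T}\langle x,y\rangle$). For a convex set $C$ and $z\in\partial C$, $N_C(z)=\{v:\langle v,y-z\rangle\le 0\ \forall y\in C\}$. For a closed polygonal curve $q=(q_1,\dots,q_m)$ (indices mod $m$), $\ell_T(q)=\sum_{j=1}^m\mu_{T^\circ}(q_{j+1}-q_j)$. $\operatorname{relint}$ denotes relative interior. *)

theory Defs
  imports "HOL-Analysis.Analysis"
begin

definition normal_cone :: "'a::euclidean_space set \<Rightarrow> 'a \<Rightarrow> 'a set" where
  "normal_cone C z = {v. \<forall>y\<in>C. v \<bullet> (y - z) \<le> 0}"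

text \<open>Support function h_T(x) = max over y in T of x . y, which equals the gauge of the polar body.\<close>
definition supp_fun :: "'a::euclidean_space set \<Rightarrow> 'a \<Rightarrow> real" where
  "supp_fun T x = Sup ((\<lambda>y. x \<bullet> y) ` T)"

definition poly_length :: "'a::euclidean_space set \<Rightarrow> nat \<Rightarrow> (nat \<Rightarrow> 'a) \<Rightarrow> real" where
  "poly_length T m q = (\<Sum>j<m. supp_fun T (q (Suc j mod m) - q j))"

definition is_vertex_face :: "'a set \<Rightarrow> bool" where
  "is_vertex_face F \<longleftrightarrow> (\<exists>v. F = {v})"

definition face_pos :: "'a::euclidean_space set \<Rightarrow> 'a \<Rightarrow> bool" where
  "face_pos F x \<longleftrightarrow> (if is_vertex_face F then x \<in> F else x \<in> rel_interior F)"

end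

theory Submission
  imports Defs
begin

lemma nc_const:
  fixes S F :: "'a::euclidean_space set"
  assumes v: "v \<in> normal_cone S x" and F: "F face_of S"
    and fx: "face_pos F x" and fy: "face_pos F y"
  shows "v \<bullet> x = v \<bullet> y"
proof (cases "is_vertex_face F")
  case True
  then show ?thesis using fx fy by (auto simp: face_pos_def is_vertex_face_def)
next
  case False
  then have x: "x \<in> rel_interior F" and y: "y \<in> rel_interior F"
    using fx fy by (auto simp: face_pos_def)
  have cF: "convex F" using F face_of_imp_convex by blast
  have FS: "F \<subseteq> S" using F face_of_imp_subset by blast
  have yF: "y \<in> F" using rel_interior_subset y by (rule subsetD)
  have le1: "v \<bullet> (y - x) \<le> 0" using v yF FS by (auto simp: normal_cone_def)
  have "y \<in> affine hull F" using yF by (rule hull_inc)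
  then obtain e where e: "e > 1" "(1 - e) *\<^sub>R y + e *\<^sub>R x \<in> F"
    using convex_rel_interior_if2[OF cF x] by blast
  then have "v \<bullet> (((1 - e) *\<^sub>R y + e *\<^sub>R x) - x) \<le> 0" using v FS by (auto simp: normal_cone_def)
  moreover have "((1 - e) *\<^sub>R y + e *\<^sub>R x) - x = (1 - e) *\<^sub>R (y - x)"
    by (simp add: algebra_simps)
  ultimately have "(1 - e) * (v \<bullet> (y - x)) \<le> 0" by (simp add: inner_scaleR_right)
  then have "(e - 1) * (v \<bullet> (y - x)) \<ge> 0" by (simp add: algebra_simps)
  with e have "v \<bullet> (y - x) \<ge> 0"
    by (simp add: zero_le_mult_iff)
  with le1 show ?thesis by (simp add: inner_diff_right)
qed

lemma supp_eq:
  fixes T :: "'a::euclidean_space set"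
  assumes "v \<in> normal_cone T p" "p \<in> T"
  shows "supp_fun T v = v \<bullet> p"
  unfolding supp_fun_def
proof (rule cSup_eq_maximum)
  show "v \<bullet> p \<in> (\<lambda>y. v \<bullet> y) ` T" using assms by auto
  show "\<And>z. z \<in> (\<lambda>y. v \<bullet> y) ` T \<Longrightarrow> z \<le> v \<bullet> p"
    using assms(1) by (auto simp: normal_cone_def inner_diff_right)
qed

lemma sum_shift:
  fixes g :: "nat \<Rightarrow> 'b::comm_monoid_add"
  shows "(\<Sum>j<m. g (Suc j mod m)) = (\<Sum>j<m. g j)"
proof (cases m)
  case 0 then show ?thesis by simp
next
  case (Suc k)
  have "(\<Sum>j<Suc k. g (Suc j mod Suc k)) = (\<Sum>j<k. g (Suc j mod Suc k)) + g 0"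
    by simp
  also have "(\<Sum>j<k. g (Suc j mod Suc k)) = (\<Sum>j<k. g (Suc j))"
    by (rule sum.cong) auto
  also have "(\<Sum>j<k. g (Suc j)) + g 0 = (\<Sum>j<Suc k. g j)"
    by (subst sum.lessThan_Suc_shift) (simp add: add.commute)
  finally show ?thesis using Suc by simp
qed

theorem proposition7p1:
  fixes K T :: "'a::euclidean_space set"
    and m :: nat
    and F G :: "nat \<Rightarrow> 'a set"
    and q q' p p' :: "nat \<Rightarrow> 'a"
  assumes "polytope K" and "polytope T"
    and "0 \<in> interior K" and "0 \<in> interior T"
    and "\<forall>j<m. F j face_of K" and "\<forall>j<m. G j face_of T"
    and "\<forall>j<m. q j \<in> frontier K \<and> q' j \<in> frontier K"
    and "\<forall>j<m. p j \<in> frontier T \<and> p' j \<in> frontier T"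
    and "\<forall>j<m. q (Suc j mod m) - q j \<in> normal_cone T (p j)"
    and "\<forall>j<m. p (Suc j mod m) - p j \<in> uminus ` normal_cone K (q (Suc j mod m))"
    and "\<forall>j<m. q' (Suc j mod m) - q' j \<in> normal_cone T (p' j)"
    and "\<forall>j<m. p' (Suc j mod m) - p' j \<in> uminus ` normal_cone K (q' (Suc j mod m))"
    and "\<forall>j<m. face_pos (F j) (q j) \<and> face_pos (F j) (q' j)"
    and "\<forall>j<m. face_pos (G j) (p j) \<and> face_pos (G j) (p' j)"
  shows "poly_length T m q = poly_length T m q'"
proof -
  define s where "s j = Suc j mod m" for j
  have sm: "j < m \<Longrightarrow> s j < m" for j by (simp add: s_def)
  have cT: "closed T" using assms(2) polytope_imp_closed by blast
  have pT: "j < m \<Longrightarrow> p j \<in> T \<and> p' j \<in> T" for j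
    using assms(8) cT frontier_subset_closed by blast
  have A: "j < m \<Longrightarrow> supp_fun T (q (s j) - q j) = (q (s j) - q j) \<bullet> p' j" for j
  proof -
    assume j: "j < m"
    have "supp_fun T (q (s j) - q j) = (q (s j) - q j) \<bullet> p j"
      using supp_eq assms(9) pT j unfolding s_def by blast
    also have "\<dots> = (q (s j) - q j) \<bullet> p' j"
      using nc_const[of "q (s j) - q j" T "p j" "G j" "p' j"] assms(9,6,14) j
      unfolding s_def by blast
    finally show ?thesis .
  qed
  have A': "j < m \<Longrightarrow> supp_fun T (q' (s j) - q' j) = (q' (s j) - q' j) \<bullet> p' j" for j
    using supp_eq assms(11) pT unfolding s_def by blast
  have B: "j < m \<Longrightarrow> q (s j) \<bullet> (p' j - p' (s j)) = q' (s j) \<bullet> (p' j - p' (s j))" for j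
  proof -
    assume j: "j < m"
    obtain w where w: "w \<in> normal_cone K (q' (s j))" "p' (s j) - p' j = - w"
      using assms(12) j unfolding s_def by blast
    have "p' j - p' (s j) = w" using w(2) by (simp add: algebra_simps)
    with w(1) have "p' j - p' (s j) \<in> normal_cone K (q' (s j))" by simp
    then have "(p' j - p' (s j)) \<bullet> q' (s j) = (p' j - p' (s j)) \<bullet> q (s j)"
      using nc_const[of "p' j - p' (s j)" K "q' (s j)" "F (s j)" "q (s j)"] assms(5,13) sm[OF j]
      by blast
    then show ?thesis by (simp add: inner_commute)
  qed
  have shq: "(\<Sum>j<m. q j \<bullet> p' j) = (\<Sum>j<m. q (s j) \<bullet> p' (s j))"
    unfolding s_def by (rule sum_shift[symmetric, of "\<lambda>j. q j \<bullet> p' j"])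
  have shq': "(\<Sum>j<m. q' j \<bullet> p' j) = (\<Sum>j<m. q' (s j) \<bullet> p' (s j))"
    unfolding s_def by (rule sum_shift[symmetric, of "\<lambda>j. q' j \<bullet> p' j"])
  have "poly_length T m q = (\<Sum>j<m. (q (s j) - q j) \<bullet> p' j)"
    unfolding poly_length_def s_def[symmetric] using A by simp
  also have "\<dots> = (\<Sum>j<m. q (s j) \<bullet> p' j) - (\<Sum>j<m. q j \<bullet> p' j)"
    by (simp add: inner_diff_left sum_subtractf)
  also have "\<dots> = (\<Sum>j<m. q (s j) \<bullet> (p' j - p' (s j)))"
    using shq by (simp add: inner_diff_right sum_subtractf)
  also have "\<dots> = (\<Sum>j<m. q' (s j) \<bullet> (p' j - p' (s j)))"
    using B by simp
  also have "\<dots> = (\<Sum>j<m. q' (s j) \<bullet> p' j) - (\<Sum>j<m. q' j \<bullet> p' j)"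
    using shq' by (simp add: inner_diff_right sum_subtractf)
  also have "\<dots> = (\<Sum>j<m. (q' (s j) - q' j) \<bullet> p' j)"
    by (simp add: inner_diff_left sum_subtractf)
  also have "\<dots> = poly_length T m q'"
    unfolding poly_length_def s_def[symmetric] using A' by simp
  finally show ?thesis .
qed

end
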